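(* Let $n=2k$ and $\tau$ be positive integers with $1\le\tau\le k$. Let $u_1,\ldots,u_k$ be pairwise distinct elements of $\mathbb{F}_{2^n}$ such that $u_iu_j^{2^k}\in\mathbb{F}_{2^k}^*$ for all $1\le i<j\le k$. Let $F(X_1,\ldots,X_\tau)$ be a reduced polynomial in $\mathbb{F}_2[X_1,\ldots,X_\tau]$ of algebraic degree $d\ge0$, and let $\{i_1,\ldots,i_\tau\}\subseteq\{1,\ldots,k\}$. Then $H(x)=x^{2^k+1}+F(\mathrm{Tr}^n_1(u_{i_1}x),\ldots,\mathrm{Tr}^n_1(u_{i_\tau}x))$ is a vectorial bent $(n,k)$-function. Furthermore, if $u_{i_1},\ldots,u_{i_\tau}$ are linearly independent over $\mathbb{F}_2$ and $d\ge2$, then the algebraic degree of $H$ equals $d$.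
   Context: $\mathrm{Tr}^n_1(x)=\sum_{i=0}^{n-1}x^{2^i}$. $x^{2^k+1}$ takes values in $\mathbb{F}_{2^k}$, so $H:\mathbb{F}_{2^n}\to\mathbb{F}_{2^k}$ (the $F$-term lies in $\mathbb{F}_2$). An $(n,k)$-function $H$ is vectorial bent if every component $\mathrm{Tr}^k_1(\lambda H(x))$, $\lambda\in\mathbb{F}_{2^k}^*$, is a bent Boolean function (i.e. $|\sum_x(-1)^{f(x)+\mathrm{Tr}^n_1(ax)}|=2^{n/2}$ for all $a$). A reduced polynomial is a multilinear polynomial over $\mathbb{F}_2$; its algebraic degree is the largest size of a monomial with nonzero coefficient. The algebraic degree of a vectorial function is the maximum algebraic degree of its coordinate Boolean functions (written as reduced multivariate polynomials over $\mathbb{F}_2$ after identifying $\mathbb{F}_{2^n}$ with $\mathbb{F}_2^n$). *)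

theory Defs
  imports Complex_Main
begin

text \<open>The field F_{2^n} is modelled by a finite field type 'a with CARD('a) = 2^n.
  Elements of the prime field F_2 are 0 and 1 of 'a.\<close>

definition tr :: "nat \<Rightarrow> 'a::field \<Rightarrow> 'a" where
  "tr m x = (\<Sum>i<m. x ^ (2 ^ i))"

definition subF :: "nat \<Rightarrow> 'a::field set" where
  "subF m = {x. x ^ (2 ^ m) = x}"

definition walsh :: "nat \<Rightarrow> ('a::{field,finite} \<Rightarrow> 'a) \<Rightarrow> 'a \<Rightarrow> int" where
  "walsh n f a = (\<Sum>x\<in>UNIV. (if f x + tr n (a * x) = 0 then 1 else -1))"

definition bent :: "nat \<Rightarrow> ('a::{field,finite} \<Rightarrow> 'a) \<Rightarrow> bool" where
  "bent n f \<longleftrightarrow> (\<forall>a. \<bar>real_of_int (walsh n f a)\<bar> = 2 powr (real n / 2))"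

definition vectorial_bent :: "nat \<Rightarrow> nat \<Rightarrow> ('a::{field,finite} \<Rightarrow> 'a) \<Rightarrow> bool" where
  "vectorial_bent n k H \<longleftrightarrow> (\<forall>x. H x \<in> subF k) \<and>
     (\<forall>c\<in>subF k - {0}. bent n (\<lambda>x. tr k (c * H x)))"

text \<open>A reduced polynomial in F_2[X_0,...,X_{t-1}] is given by its set of monomials
  (each monomial a subset of variable indices).\<close>
definition reduced_poly :: "nat \<Rightarrow> nat set set \<Rightarrow> bool" where
  "reduced_poly t S \<longleftrightarrow> S \<subseteq> Pow {..<t}"

definition poly_eval :: "nat set set \<Rightarrow> (nat \<Rightarrow> bool) \<Rightarrow> bool" where
  "poly_eval S b \<longleftrightarrow> odd (card {M\<in>S. \<forall>i\<in>M. b i})"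

definition poly_degree :: "nat set set \<Rightarrow> nat" where
  "poly_degree S = Max (insert 0 (card ` S))"

definition F2_basis :: "(nat \<Rightarrow> 'a::field) \<Rightarrow> nat \<Rightarrow> 'a set \<Rightarrow> bool" where
  "F2_basis e m V \<longleftrightarrow> bij_betw (\<lambda>T. \<Sum>i\<in>T. e i) (Pow {..<m}) V"

definition F2_lin_indep :: "(nat \<Rightarrow> 'a::field) \<Rightarrow> nat \<Rightarrow> bool" where
  "F2_lin_indep v t \<longleftrightarrow> inj_on (\<lambda>T. \<Sum>i\<in>T. v i) (Pow {..<t})"

definition coords :: "(nat \<Rightarrow> 'a::field) \<Rightarrow> nat \<Rightarrow> 'a \<Rightarrow> nat set" where
  "coords w m y = (THE T. T \<subseteq> {..<m} \<and> (\<Sum>i\<in>T. w i) = y)"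

text \<open>g (Boolean function on 'a, identified with F_2^n via basis e) is represented
  by the reduced polynomial with monomial set P.\<close>
definition represents :: "(nat \<Rightarrow> 'a::field) \<Rightarrow> nat \<Rightarrow> ('a \<Rightarrow> bool) \<Rightarrow> nat set set \<Rightarrow> bool" where
  "represents e n g P \<longleftrightarrow> P \<subseteq> Pow {..<n} \<and>
     (\<forall>T\<subseteq>{..<n}. g (\<Sum>i\<in>T. e i) = poly_eval P (\<lambda>i. i \<in> T))"

definition bool_alg_degree :: "(nat \<Rightarrow> 'a::field) \<Rightarrow> nat \<Rightarrow> ('a \<Rightarrow> bool) \<Rightarrow> nat" where
  "bool_alg_degree e n g = poly_degree (THE P. represents e n g P)"

definition vec_alg_degree ::
  "(nat \<Rightarrow> 'a::field) \<Rightarrow> nat \<Rightarrow> (nat \<Rightarrow> 'a) \<Rightarrow> nat \<Rightarrow> ('a \<Rightarrow> 'a) \<Rightarrow> nat" where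
  "vec_alg_degree e n w m H = Max (insert 0 ((\<lambda>j. bool_alg_degree e n (\<lambda>x. j \<in> coords w m (H x))) ` {..<m}))"

end

theory Submission
  imports Defs "HOL-Computational_Algebra.Polynomial"
begin

lemma char2_from_card:
  assumes card: "card (UNIV :: 'a::{field,finite} set) = 2 ^ n" and n: "n \<ge> 1"
  shows "(1::'a) + 1 = 0"
proof -
  have "(\<Sum>x\<in>UNIV. x + (1::'a)) = (\<Sum>x\<in>UNIV. x)"
    by (rule sum.reindex_bij_witness[where i="\<lambda>x. x - 1" and j="\<lambda>x. x + 1"]) auto
  hence "of_nat (card (UNIV::'a set)) = (0::'a)"
    by (simp add: sum.distrib)
  hence "(2::'a) ^ n = 0" using card by simp
  hence "(2::'a) = 0" by simp
  thus ?thesis by (simp add: one_add_one)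
qed

lemma c2_double: assumes c2: "(1::'a::field) + 1 = 0" shows "x + x = (0::'a)"
proof -
  have "x + x = x * (1 + 1)" by (simp add: algebra_simps)
  thus ?thesis using c2 by simp
qed

lemma c2_minus: assumes c2: "(1::'a::field) + 1 = 0" shows "- x = (x::'a)"
  using c2_double[OF c2, of x] by (simp add: add_eq_0_iff)

lemma c2_diff: assumes c2: "(1::'a::field) + 1 = 0" shows "x - y = x + (y::'a)"
  using c2_minus[OF c2, of y] by (metis diff_conv_add_uminus)

lemma frob2: assumes c2: "(1::'a::field) + 1 = 0" shows "(x + y) ^ 2 = x ^ 2 + (y::'a) ^ 2"
proof -
  have "(x + y) ^ 2 = x^2 + y^2 + (x*y + x*y)" by (simp add: power2_eq_square algebra_simps)
  thus ?thesis using c2_double[OF c2, of "x*y"] by simp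
qed

lemma frob_pow: assumes c2: "(1::'a::field) + 1 = 0"
  shows "(x + y) ^ (2 ^ i) = x ^ (2 ^ i) + (y::'a) ^ (2 ^ i)"
proof (induction i)
  case 0 then show ?case by simp
next
  case (Suc i)
  have "(x + y) ^ (2 ^ Suc i) = ((x + y) ^ (2 ^ i)) ^ 2" by (simp add: power_mult[symmetric] mult.commute)
  also have "\<dots> = (x ^ (2 ^ i)) ^ 2 + (y ^ (2 ^ i)) ^ 2" using Suc frob2[OF c2] by simp
  also have "\<dots> = x ^ (2 ^ Suc i) + y ^ (2 ^ Suc i)" by (simp add: power_mult[symmetric] mult.commute)
  finally show ?case .
qed

lemma frob_sum: assumes c2: "(1::'a::field) + 1 = 0"
  shows "(\<Sum>j\<in>A. f j) ^ (2 ^ i) = (\<Sum>j\<in>A. (f j :: 'a) ^ (2 ^ i))"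
proof (induction A rule: infinite_finite_induct)
  case (insert x F) then show ?case by (simp add: frob_pow[OF c2])
qed auto


lemma tr_add: assumes c2: "(1::'a::field) + 1 = 0"
  shows "tr m (x + y) = tr m x + tr m (y::'a)"
  unfolding tr_def by (simp add: frob_pow[OF c2] sum.distrib)

lemma tr_zero[simp]: "tr m (0::'a::field) = 0"
  unfolding tr_def by (simp add: power_0_left)

lemma tr_Suc: "tr (Suc m) x = tr m x + x ^ (2 ^ m)"
  unfolding tr_def by simp

lemma tr_sq: assumes c2: "(1::'a::field) + 1 = 0"
  shows "(tr m x) ^ 2 = tr m x + x + (x::'a) ^ (2 ^ m)"
proof (induction m)
  case 0 then show ?case using c2_double[OF c2, of x] by (simp add: tr_def)
next
  case (Suc m)
  have "(tr (Suc m) x) ^ 2 = (tr m x)^2 + (x ^ (2^m))^2" by (simp add: tr_Suc frob2[OF c2])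
  also have "(x ^ (2^m))^2 = x ^ (2 ^ Suc m)" by (simp add: power_mult[symmetric] mult.commute)
  finally show ?case using Suc c2_double[OF c2, of "x^(2^m)"] by (simp add: tr_Suc algebra_simps)
qed

lemma idem_01: "(y::'a::field) ^ 2 = y \<Longrightarrow> y = 0 \<or> y = 1"
  by (metis power2_eq_square mult_cancel_right2 mult_cancel_left1 mult_zero_left)

lemma tr_01: assumes c2: "(1::'a::field) + 1 = 0" and "x ^ (2 ^ m) = x"
  shows "tr m (x::'a) = 0 \<or> tr m x = 1"
  apply (rule idem_01) using tr_sq[OF c2, of m x] assms c2_double[OF c2, of x] by (simp add: add.assoc)

lemma fermat_field:
  assumes card: "card (UNIV :: 'a::{field,finite} set) = q"
  shows "(x::'a) ^ q = x"
proof (cases "x = 0")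
  case True
  have "q > 0" using card finite_UNIV_card_ge_0 by (metis finite)
  then show ?thesis using True by simp
next
  case False
  let ?A = "UNIV - {0::'a}"
  have "(\<Prod>y\<in>?A. x * y) = (\<Prod>y\<in>?A. y)"
    by (rule prod.reindex_bij_witness[where i="\<lambda>y. y / x" and j="\<lambda>y. x * y"]) (use False in auto)
  hence "x ^ card ?A * (\<Prod>y\<in>?A. y) = (\<Prod>y\<in>?A. y)" by (simp add: prod.distrib)
  moreover have "(\<Prod>y\<in>?A. y) \<noteq> 0" by simp
  ultimately have "x ^ card ?A = 1" by simp
  moreover have "card ?A = q - 1" using card by (simp add: card_Diff_subset)
  moreover have "q \<ge> 1" using card card_gt_0_iff[of "UNIV::'a set"] by simp
  ultimately show ?thesis by (metis power_Suc Suc_diff_1 mult.right_neutral less_le_trans zero_less_one le_less)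
qed


lemma tr_nonzero:
  assumes card: "card (UNIV :: 'a::{field,finite} set) = 2 ^ n" and n: "n \<ge> 1"
  shows "\<exists>x::'a. tr n x \<noteq> 0"
proof (rule ccontr)
  assume H: "\<not> ?thesis"
  define p :: "'a poly" where "p = (\<Sum>i<n. monom 1 (2 ^ i))"
  have ev: "poly p x = tr n x" for x unfolding p_def tr_def by (simp add: poly_sum poly_monom)
  have c: "coeff p (2 ^ (n - 1)) = 1"
  proof -
    have "coeff p (2 ^ (n - 1)) = (\<Sum>i<n. if 2 ^ i = (2::nat) ^ (n - 1) then 1 else 0)"
      unfolding p_def by (simp add: coeff_sum coeff_monom)
    also have "\<dots> = (\<Sum>i\<in>{n - 1}. 1)"
      by (rule sum.mono_neutral_cong_right) (use n in auto)
    finally show ?thesis by simp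
  qed
  hence p0: "p \<noteq> 0" by auto
  have "degree p \<le> 2 ^ (n - 1)"
  proof (rule degree_le, intro allI impI)
    fix j :: nat assume j: "2 ^ (n - 1) < j"
    have "\<And>i. i < n \<Longrightarrow> (2::nat) ^ i \<le> 2 ^ (n - 1)" by (rule power_increasing) auto
    hence "\<And>i. i < n \<Longrightarrow> (2::nat) ^ i \<noteq> j" using j by fastforce
    thus "coeff p j = 0" unfolding p_def by (simp add: coeff_sum coeff_monom)
  qed
  moreover have "card {x. poly p x = 0} \<le> degree p" by (rule card_poly_roots_bound[OF p0])
  moreover have "{x. poly p x = 0} = UNIV" using H ev by auto
  moreover have "(2::nat) ^ (n - 1) < 2 ^ n" using n by simp
  ultimately have "card (UNIV::'a set) < 2 ^ n" by (metis le_trans le_less_trans)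
  thus False using card by simp
qed

definition sg :: "'a::field \<Rightarrow> int" where "sg y = (if y = 0 then 1 else -1)"

lemma sg_add: assumes c2: "(1::'a::field) + 1 = 0" and "y = 0 \<or> y = 1" "z = 0 \<or> z = 1"
  shows "sg (y + z :: 'a) = sg y * sg z"
  using assms c2 by (auto simp: sg_def)

lemma F2_add: assumes c2: "(1::'a::field) + 1 = 0" and "y = 0 \<or> y = 1" "z = 0 \<or> z = 1"
  shows "(y + z :: 'a) = 0 \<or> y + z = 1"
  using assms c2 by auto

lemma sg_one_add: assumes c2: "(1::'a::field) + 1 = 0" and "y = 0 \<or> y = 1"
  shows "sg (y + 1 :: 'a) = - sg y"
  using assms c2 by (auto simp: sg_def)

lemma sum_invol_zero:
  fixes t :: "'b \<Rightarrow> int"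
  assumes "finite A" "\<And>x. x \<in> A \<Longrightarrow> \<sigma> x \<in> A" "\<And>x. x \<in> A \<Longrightarrow> \<sigma> (\<sigma> x) = x"
    "\<And>x. x \<in> A \<Longrightarrow> t (\<sigma> x) = - t x"
  shows "(\<Sum>x\<in>A. t x) = 0"
proof -
  have "(\<Sum>x\<in>A. t x) = (\<Sum>x\<in>A. t (\<sigma> x))"
    by (rule sum.reindex_bij_witness[where i=\<sigma> and j=\<sigma>]) (use assms in auto)
  also have "\<dots> = - (\<Sum>x\<in>A. t x)" using assms(4) by (simp add: sum_negf)
  finally show ?thesis by simp
qed

context
  fixes n :: nat
  assumes card: "card (UNIV :: 'a::{field,finite} set) = 2 ^ n" and n1: "n \<ge> 1"
begin

lemma c2: "(1::'a) + 1 = 0" by (rule char2_from_card[OF card n1])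

lemma frob_n: "(x::'a) ^ (2 ^ n) = x" by (rule fermat_field[OF card])

lemma trn_01: "tr n (x::'a) = 0 \<or> tr n x = 1"
  by (rule tr_01[OF c2 frob_n])

lemma char_sum:
  "(\<Sum>x\<in>UNIV. sg (tr n (b * (x::'a)))) = (if b = 0 then 2 ^ n else 0)"
proof (cases "b = 0")
  case True then show ?thesis using card by (simp add: sg_def)
next
  case False
  obtain x0 :: 'a where x0: "tr n x0 \<noteq> 0" using tr_nonzero[OF card n1] by blast
  define z0 where "z0 = x0 / b"
  have bz: "tr n (b * z0) = 1" using x0 trn_01[of x0] False unfolding z0_def by auto
  have "(\<Sum>x\<in>UNIV. sg (tr n (b * (x::'a)))) = 0"
  proof (rule sum_invol_zero[where \<sigma>="\<lambda>x. x + z0"])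
    fix x :: 'a
    show "x + z0 + z0 = x" using c2_double[OF c2, of z0] by (simp add: add.assoc)
    have "tr n (b * (x + z0)) = tr n (b * x) + 1"
      using bz by (simp add: distrib_left tr_add[OF c2])
    thus "sg (tr n (b * (x + z0))) = - sg (tr n (b * x))"
      using sg_one_add[OF c2 trn_01] by simp
  qed auto
  then show ?thesis using False by simp
qed

end

lemma tr_add_len: "tr (m + j) y = tr m y + tr j ((y::'a::field) ^ (2 ^ m))"
proof (induction j)
  case 0 then show ?case by (simp add: tr_def)
next
  case (Suc j)
  have "(y ^ 2 ^ m) ^ 2 ^ j = y ^ 2 ^ (m + j)" by (simp add: power_mult[symmetric] power_add)
  then show ?case using Suc by (simp add: tr_Suc add_ac)
qed

context
  fixes k :: nat
  assumes card: "card (UNIV :: 'a::{field,finite} set) = 2 ^ (2 * k)" and k1: "k \<ge> 1"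
begin

lemma n1: "2 * k \<ge> 1" using k1 by simp
lemma cc2: "(1::'a) + 1 = 0" by (rule c2[OF card n1])
lemma frobq2: "((x::'a) ^ (2 ^ k)) ^ (2 ^ k) = x"
proof -
  have "((x::'a) ^ (2 ^ k)) ^ (2 ^ k) = x ^ (2 ^ (2 * k))"
    by (simp add: power_mult[symmetric] power_add[symmetric] mult_2)
  thus ?thesis using frob_n[OF card n1] by simp
qed

lemma subF_iff: "y \<in> subF k \<longleftrightarrow> (y::'a) ^ (2 ^ k) = y" by (simp add: subF_def)
lemma subF_add: "y \<in> subF k \<Longrightarrow> z \<in> subF k \<Longrightarrow> (y::'a) + z \<in> subF k"
  by (simp add: subF_def frob_pow[OF cc2])
lemma subF_mult: "y \<in> subF k \<Longrightarrow> z \<in> subF k \<Longrightarrow> (y::'a) * z \<in> subF k"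
  by (simp add: subF_def power_mult_distrib)
lemma subF_inv: "y \<in> subF k \<Longrightarrow> inverse (y::'a) \<in> subF k"
  by (simp add: subF_def power_inverse)
lemma subF_0: "(0::'a) \<in> subF k" by (simp add: subF_def power_0_left)
lemma subF_1: "(1::'a) \<in> subF k" by (simp add: subF_def)
lemma subF_conj: "((y::'a) ^ (2^k)) * z \<in> subF k \<Longrightarrow> y * z ^ (2^k) \<in> subF k"
proof -
  assume "((y::'a) ^ (2^k)) * z \<in> subF k"
  hence "(y ^ (2^k) * z) ^ (2^k) \<in> subF k" by (simp add: subF_def)
  thus ?thesis by (simp add: power_mult_distrib frobq2 mult.commute)
qed
lemma N_subF: "(x::'a) ^ (2 ^ k + 1) \<in> subF k"
  by (simp add: subF_def power_mult_distrib frobq2 power_add mult.commute)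

lemma N_add: "((x::'a) + z) ^ (2 ^ k + 1) = x ^ (2 ^ k + 1) + z ^ (2 ^ k + 1) + (x ^ (2^k) * z + x * z ^ (2^k))"
  by (simp add: power_add frob_pow[OF cc2] algebra_simps)

lemma trn_split: "tr (2 * k) (y::'a) = tr k y + tr k (y ^ (2 ^ k))"
  using tr_add_len[of k k y] by (simp add: mult_2)

lemma trn_subF: "y \<in> subF k \<Longrightarrow> tr (2 * k) (y::'a) = 0"
  by (simp add: trn_split subF_def c2_double[OF cc2])

lemma trk_01: "y \<in> subF k \<Longrightarrow> tr k (y::'a) = 0 \<or> tr k y = 1"
  by (rule tr_01[OF cc2]) (simp add: subF_def)

lemma trn01: "tr (2 * k) (y::'a) = 0 \<or> tr (2 * k) y = 1" by (rule trn_01[OF card n1])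

definition fq :: "'a \<Rightarrow> 'a \<Rightarrow> 'a" where "fq c x = tr k (c * x ^ (2 ^ k + 1))"

lemma fq_01: "c \<in> subF k \<Longrightarrow> fq c x = 0 \<or> fq c x = 1"
  unfolding fq_def by (rule trk_01, rule subF_mult, assumption, rule N_subF)

lemma fq_0: "fq c 0 = 0" by (simp add: fq_def power_0_left)

lemma fq_add: assumes c: "c \<in> subF k"
  shows "fq c (x + z) = fq c x + fq c z + tr (2 * k) (c * z ^ (2 ^ k) * x)"
proof -
  have cq: "c ^ (2^k) = c" using c by (simp add: subF_def)
  have "(c * z ^ (2 ^ k) * x) ^ (2 ^ k) = c * x ^ (2^k) * z"
    by (simp add: power_mult_distrib cq frobq2 algebra_simps)
  hence e: "tr (2 * k) (c * z ^ (2 ^ k) * x) = tr k (c * z ^ (2 ^ k) * x) + tr k (c * x ^ (2^k) * z)"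
    by (simp add: trn_split)
  have "c * (x ^ (2 ^ k + 1) + z ^ (2 ^ k + 1) + (x ^ (2^k) * z + x * z ^ (2^k))) =
     c * x ^ (2 ^ k + 1) + c * z ^ (2 ^ k + 1) + (c * z ^ (2 ^ k) * x + c * x ^ (2^k) * z)"
    by (simp add: algebra_simps)
  then show ?thesis unfolding fq_def N_add
    by (simp add: tr_add[OF cc2] e)
qed

lemma walsh_sg: "walsh (2 * k) f a = (\<Sum>x\<in>UNIV. sg (f x + tr (2 * k) (a * x)))"
  unfolding walsh_def sg_def by simp

lemma sg_sq: "sg y * sg y = 1" by (simp add: sg_def)

lemma walsh_fq_sq: assumes c: "c \<in> subF k" "c \<noteq> 0"
  shows "(walsh (2 * k) (fq c) a) ^ 2 = 2 ^ (2 * k)"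
proof -
  let ?n = "2 * k"
  define t where "t x = sg (fq c x + tr ?n (a * x))" for x
  have t01: "fq c x + tr ?n (a * x) = 0 \<or> fq c x + tr ?n (a * x) = 1" for x
    by (rule F2_add[OF cc2 fq_01[OF c(1)] trn01])
  have key: "t x * t (x + z) = t z * sg (tr ?n ((c * z ^ (2 ^ k)) * x))" for x z
  proof -
    have "fq c (x + z) + tr ?n (a * (x + z)) =
          (fq c x + tr ?n (a * x)) + ((fq c z + tr ?n (a * z)) + tr ?n ((c * z ^ (2 ^ k)) * x))"
      by (simp add: fq_add[OF c(1)] distrib_left tr_add[OF cc2] algebra_simps)
    hence "t (x + z) = t x * (t z * sg (tr ?n ((c * z ^ (2 ^ k)) * x)))"
      unfolding t_def
      by (simp add: sg_add[OF cc2 t01 F2_add[OF cc2 t01 trn01]] sg_add[OF cc2 t01 trn01])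
    thus ?thesis by (simp add: mult.assoc[symmetric] sg_sq t_def)
  qed
  have "(walsh ?n (fq c) a) ^ 2 = (\<Sum>x\<in>UNIV. t x) * (\<Sum>y\<in>UNIV. t y)"
    by (simp add: walsh_sg t_def power2_eq_square)
  also have "\<dots> = (\<Sum>x\<in>UNIV. \<Sum>z\<in>UNIV. t x * t (x + z))"
  proof -
    have "(\<Sum>y\<in>UNIV. t y) = (\<Sum>z\<in>UNIV. t (x + z))" for x
      by (rule sum.reindex_bij_witness[where j="\<lambda>y. y - x" and i="\<lambda>z. x + z"]) auto
    hence "(\<Sum>x\<in>UNIV. t x) * (\<Sum>y\<in>UNIV. t y) = (\<Sum>x\<in>UNIV. t x * (\<Sum>z\<in>UNIV. t (x + z)))"
      by (simp add: sum_distrib_right)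
    thus ?thesis by (simp add: sum_distrib_left)
  qed
  also have "\<dots> = (\<Sum>z\<in>UNIV. t z * (\<Sum>x\<in>UNIV. sg (tr ?n ((c * z ^ (2 ^ k)) * x))))"
    by (subst sum.swap) (simp add: key sum_distrib_left)
  also have "\<dots> = (\<Sum>z\<in>UNIV. if (z::'a) = 0 then t 0 * 2 ^ ?n else 0)"
  proof (rule sum.cong[OF refl])
    fix z :: 'a
    show "t z * (\<Sum>x\<in>UNIV. sg (tr ?n ((c * z ^ (2 ^ k)) * x))) = (if z = 0 then t 0 * 2 ^ ?n else 0)"
      using c(2) char_sum[OF card n1, of "c * z ^ (2 ^ k)"] by (auto simp: power_0_left)
  qed
  also have "\<dots> = 2 ^ ?n" by (simp add: t_def fq_0 sg_def)
  finally show ?thesis .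
qed

lemma walsh_fq_abs: assumes c: "c \<in> subF k" "c \<noteq> 0"
  shows "\<bar>walsh (2 * k) (fq c) a\<bar> = 2 ^ k"
proof -
  have "\<bar>walsh (2 * k) (fq c) a\<bar> ^ 2 = (2 ^ k) ^ 2"
    using walsh_fq_sq[OF c, of a] by (simp add: power_mult[symmetric] mult.commute)
  thus ?thesis by (rule power2_eq_imp_eq) auto
qed


lemma sg_abs: "\<bar>sg y\<bar> = 1" by (simp add: sg_def)

lemma walsh_invariance:
  fixes \<tau> :: nat and v :: "nat \<Rightarrow> 'a" and Gv :: "(nat \<Rightarrow> bool) \<Rightarrow> 'a"
  assumes c: "c \<in> subF k" "c \<noteq> 0"
  and vq: "\<forall>i<\<tau>. \<forall>j<\<tau>. (v i) ^ (2 ^ k) * v j \<in> subF k"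
  and Gcong: "\<forall>b b'. (\<forall>j<\<tau>. b j = b' j) \<longrightarrow> Gv b = Gv b'"
  and G01: "\<forall>b. Gv b = 0 \<or> Gv b = (1::'a)"
  shows "\<bar>walsh (2 * k) (\<lambda>x. fq c x + Gv (\<lambda>j. tr (2 * k) (v j * x) \<noteq> 0)) a\<bar> = 2 ^ k"
proof -
  let ?n = "2 * k"
  define w where "w j = (v j / c) ^ (2 ^ k)" for j
  have hv: "c * (w j) ^ (2 ^ k) = v j" for j
    using c(2) by (simp add: w_def frobq2)
  have cq: "c ^ (2 ^ k) = c" using c(1) by (simp add: subF_def)
  have orth: "tr ?n (v j * w i) = 0" if "i < \<tau>" "j < \<tau>" for i j
  proof -
    have "v j * w i = ((v i) ^ (2 ^ k) * v j) * inverse c"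
      by (simp add: w_def power_divide cq field_simps)
    also have "\<dots> \<in> subF k" using vq that c by (simp add: subF_mult subF_inv)
    finally show ?thesis by (rule trn_subF)
  qed
  define \<beta> where "\<beta> j = (fq c (w j) + tr ?n (a * w j) \<noteq> 0)" for j
  define A where "A = {x::'a. \<exists>j<\<tau>. (tr ?n (v j * x) \<noteq> 0) \<noteq> \<beta> j}"
  define ix where "ix x = (LEAST j. j < \<tau> \<and> (tr ?n (v j * x) \<noteq> 0) \<noteq> \<beta> j)" for x
  define \<sigma> where "\<sigma> x = x + w (ix x)" for x
  have shift: "tr ?n (v j * (x + w i)) = tr ?n (v j * x)" if "i < \<tau>" "j < \<tau>" for i j x
    using orth[OF that] by (simp add: distrib_left tr_add[OF cc2])
  have ixA: "ix x < \<tau> \<and> (tr ?n (v (ix x) * x) \<noteq> 0) \<noteq> \<beta> (ix x)" if "x \<in> A" for x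
  proof -
    from that obtain j where "j < \<tau> \<and> (tr ?n (v j * x) \<noteq> 0) \<noteq> \<beta> j" unfolding A_def by blast
    then show ?thesis unfolding ix_def by (rule LeastI[of "\<lambda>j. j < \<tau> \<and> (tr ?n (v j * x) \<noteq> 0) \<noteq> \<beta> j"])
  qed
  have same: "tr ?n (v j * \<sigma> x) = tr ?n (v j * x)" if "x \<in> A" "j < \<tau>" for x j
    unfolding \<sigma>_def using shift ixA[OF that(1)] that(2) by blast
  have ix_same: "ix (\<sigma> x) = ix x" if "x \<in> A" for x
  proof -
    have "(\<lambda>j. j < \<tau> \<and> (tr ?n (v j * \<sigma> x) \<noteq> 0) \<noteq> \<beta> j) = (\<lambda>j. j < \<tau> \<and> (tr ?n (v j * x) \<noteq> 0) \<noteq> \<beta> j)"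
      using same[OF that] by auto
    thus ?thesis unfolding ix_def by simp
  qed
  have \<sigma>A: "\<sigma> x \<in> A" if "x \<in> A" for x
    using same[OF that] that unfolding A_def by auto
  have \<sigma>\<sigma>: "\<sigma> (\<sigma> x) = x" if "x \<in> A" for x
    using ix_same[OF that] c2_double[OF cc2, of "w (ix x)"] unfolding \<sigma>_def by (simp add: add.assoc)
  define R where "R = (\<Sum>x\<in>UNIV - A. sg (fq c x + tr ?n (a * x)))"
  have gen: "walsh ?n (\<lambda>x. fq c x + G (\<lambda>j. tr ?n (v j * x) \<noteq> 0)) a = sg (G \<beta>) * R"
    if Gc: "\<forall>b b'. (\<forall>j<\<tau>. b j = b' j) \<longrightarrow> G b = G b'" and G1: "\<forall>b. G b = 0 \<or> G b = (1::'a)" for G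
  proof -
    define T where "T x = sg (fq c x + G (\<lambda>j. tr ?n (v j * x) \<noteq> 0) + tr ?n (a * x))" for x
    have F1: "fq c x + G b + tr ?n (a * x) = 0 \<or> fq c x + G b + tr ?n (a * x) = 1" for x b
      by (intro F2_add[OF cc2] fq_01[OF c(1)] G1[rule_format] trn01)
    have "(\<Sum>x\<in>A. T x) = 0"
    proof (rule sum_invol_zero[where \<sigma>=\<sigma>])
      fix x assume xA: "x \<in> A"
      show "\<sigma> x \<in> A" "\<sigma> (\<sigma> x) = x" using \<sigma>A[OF xA] \<sigma>\<sigma>[OF xA] by auto
      let ?i = "ix x"
      have i: "?i < \<tau>" "(tr ?n (v ?i * x) \<noteq> 0) \<noteq> \<beta> ?i" using ixA[OF xA] by auto
      have Geq: "G (\<lambda>j. tr ?n (v j * \<sigma> x) \<noteq> 0) = G (\<lambda>j. tr ?n (v j * x) \<noteq> 0)"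
        by (rule Gc[rule_format]) (simp add: same[OF xA])
      have t01: "fq c (w ?i) + tr ?n (a * w ?i) = 0 \<or> fq c (w ?i) + tr ?n (a * w ?i) = 1"
        by (intro F2_add[OF cc2] fq_01[OF c(1)] trn01)
      have one: "(fq c (w ?i) + tr ?n (a * w ?i)) + tr ?n (v ?i * x) = 1"
        using i(2) t01 trn01[of "v ?i * x"] cc2 unfolding \<beta>_def by auto
      have "fq c (\<sigma> x) + G (\<lambda>j. tr ?n (v j * \<sigma> x) \<noteq> 0) + tr ?n (a * \<sigma> x)
          = (fq c x + G (\<lambda>j. tr ?n (v j * x) \<noteq> 0) + tr ?n (a * x)) +
            ((fq c (w ?i) + tr ?n (a * w ?i)) + tr ?n (c * w ?i ^ (2 ^ k) * x))"
        unfolding Geq unfolding \<sigma>_def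
        by (simp add: fq_add[OF c(1)] distrib_left tr_add[OF cc2] algebra_simps)
      also have "tr ?n (c * w ?i ^ (2 ^ k) * x) = tr ?n (v ?i * x)" using hv by simp
      finally show "T (\<sigma> x) = - T x"
        unfolding T_def using one sg_one_add[OF cc2 F1] by simp
    qed simp
    moreover have "(\<Sum>x\<in>UNIV - A. T x) = sg (G \<beta>) * R"
      unfolding R_def sum_distrib_left
    proof (rule sum.cong[OF refl])
      fix x assume "x \<in> UNIV - A"
      hence "\<forall>j<\<tau>. (tr ?n (v j * x) \<noteq> 0) = \<beta> j" unfolding A_def by auto
      hence Geq: "G (\<lambda>j. tr ?n (v j * x) \<noteq> 0) = G \<beta>" by (intro Gc[rule_format]) simp
      have "T x = sg (G \<beta> + (fq c x + tr ?n (a * x)))"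
        unfolding T_def Geq by (simp add: add_ac)
      also have "\<dots> = sg (G \<beta>) * sg (fq c x + tr ?n (a * x))"
        by (rule sg_add[OF cc2 G1[rule_format] F2_add[OF cc2 fq_01[OF c(1)] trn01]])
      finally show "T x = sg (G \<beta>) * sg (fq c x + tr ?n (a * x))" .
    qed
    moreover have "(\<Sum>x\<in>UNIV. T x) = (\<Sum>x\<in>UNIV - A. T x) + (\<Sum>x\<in>A. T x)"
      by (rule sum.subset_diff) auto
    ultimately show ?thesis unfolding walsh_sg T_def by (simp add: add.assoc)
  qed
  have "walsh ?n (\<lambda>x. fq c x + (\<lambda>b. 0) (\<lambda>j. tr ?n (v j * x) \<noteq> 0)) a = sg ((\<lambda>b. (0::'a)) \<beta>) * R"
    by (rule gen) auto
  hence "walsh ?n (fq c) a = R" by (simp add: sg_def)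
  hence "\<bar>R\<bar> = 2 ^ k" using walsh_fq_abs[OF c, of a] by simp
  thus ?thesis using gen[OF Gcong G01] by (simp add: abs_mult sg_abs)
qed

lemma poly_eval_cong: assumes "reduced_poly \<tau> S" "\<forall>j<\<tau>. b j = b' j"
  shows "poly_eval S b = poly_eval S b'"
proof -
  have "{M\<in>S. \<forall>i\<in>M. b i} = {M\<in>S. \<forall>i\<in>M. b' i}"
    using assms unfolding reduced_poly_def by auto
  thus ?thesis unfolding poly_eval_def by simp
qed

lemma bent_part:
  fixes \<tau> :: nat and v :: "nat \<Rightarrow> 'a" and S :: "nat set set"
  assumes vq: "\<forall>i<\<tau>. \<forall>j<\<tau>. (v i) ^ (2 ^ k) * v j \<in> subF k"
    and F: "reduced_poly \<tau> S"
  shows "vectorial_bent (2 * k) k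
     (\<lambda>x. x ^ (2 ^ k + 1) + (if poly_eval S (\<lambda>j. tr (2 * k) (v j * x) \<noteq> 0) then 1 else 0))"
  unfolding vectorial_bent_def
proof (intro conjI allI ballI)
  fix x :: 'a
  show "x ^ (2 ^ k + 1) + (if poly_eval S (\<lambda>j. tr (2 * k) (v j * x) \<noteq> 0) then 1 else 0) \<in> subF k"
    by (intro subF_add N_subF) (simp add: subF_0 subF_1)
next
  fix c :: 'a assume c: "c \<in> subF k - {0}"
  define Gv where "Gv b = (if poly_eval S b then tr k c else 0)" for b
  have eq: "(\<lambda>x. tr k (c * (x ^ (2 ^ k + 1) + (if poly_eval S (\<lambda>j. tr (2 * k) (v j * x) \<noteq> 0) then 1 else 0))))
      = (\<lambda>x. fq c x + Gv (\<lambda>j. tr (2 * k) (v j * x) \<noteq> 0))"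
  proof (rule ext)
    fix x :: 'a
    let ?P = "poly_eval S (\<lambda>j. tr (2 * k) (v j * x) \<noteq> 0)"
    show "tr k (c * (x ^ (2 ^ k + 1) + (if ?P then 1 else 0))) = fq c x + Gv (\<lambda>j. tr (2 * k) (v j * x) \<noteq> 0)"
    proof (cases ?P)
      case True
      have "c * (x ^ (2 ^ k + 1) + 1) = c * x ^ (2 ^ k + 1) + c" by (simp only: distrib_left mult_1_right)
      hence "tr k (c * (x ^ (2 ^ k + 1) + 1)) = fq c x + tr k c" unfolding fq_def by (simp only: tr_add[OF cc2])
      thus ?thesis using True unfolding Gv_def by simp
    next
      case False
      thus ?thesis unfolding Gv_def fq_def by simp
    qed
  qed
  have Gc: "\<forall>b b'. (\<forall>j<\<tau>. b j = b' j) \<longrightarrow> Gv b = Gv b'"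
  proof (intro allI impI)
    fix b b' :: "nat \<Rightarrow> bool" assume "\<forall>j<\<tau>. b j = b' j"
    hence "poly_eval S b = poly_eval S b'" by (rule poly_eval_cong[OF F])
    thus "Gv b = Gv b'" unfolding Gv_def by simp
  qed
  have G1: "\<forall>b. Gv b = 0 \<or> Gv b = 1" unfolding Gv_def using trk_01[of c] c by auto
  show "bent (2 * k) (\<lambda>x. tr k (c * (x ^ (2 ^ k + 1) + (if poly_eval S (\<lambda>j. tr (2 * k) (v j * x) \<noteq> 0) then 1 else 0))))"
    unfolding bent_def eq
  proof
    fix a
    have "\<bar>walsh (2 * k) (\<lambda>x. fq c x + Gv (\<lambda>j. tr (2 * k) (v j * x) \<noteq> 0)) a\<bar> = 2 ^ k"
      by (rule walsh_invariance[OF _ _ vq Gc G1]) (use c in auto)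
    hence "real_of_int \<bar>walsh (2 * k) (\<lambda>x. fq c x + Gv (\<lambda>j. tr (2 * k) (v j * x) \<noteq> 0)) a\<bar> = real_of_int (2 ^ k)"
      by (simp only:)
    hence "\<bar>real_of_int (walsh (2 * k) (\<lambda>x. fq c x + Gv (\<lambda>j. tr (2 * k) (v j * x) \<noteq> 0)) a)\<bar> = 2 ^ k"
      by simp
    moreover have "(2::real) powr (real (2 * k) / 2) = 2 ^ k" by (simp add: powr_realpow)
    ultimately show "\<bar>real_of_int (walsh (2 * k) (\<lambda>x. fq c x + Gv (\<lambda>j. tr (2 * k) (v j * x) \<noteq> 0)) a)\<bar> = 2 powr (real (2 * k) / 2)"
      by simp
  qed
qed
end

fun cube :: "('a::field \<Rightarrow> 'a) \<Rightarrow> 'a \<Rightarrow> 'a list \<Rightarrow> 'a" where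
  "cube g x [] = g x"
| "cube g x (a # as) = cube (\<lambda>y. g (y + a) + g y) x as"

lemma cube_add: "cube (\<lambda>y. f y + g y) x as = cube f x as + cube g x as"
proof (induction as arbitrary: f g)
  case Nil then show ?case by simp
next
  case (Cons a as)
  have "(\<lambda>y. f (y + a) + g (y + a) + (f y + g y)) = (\<lambda>y. (f (y + a) + f y) + (g (y + a) + g y))"
    by (rule ext) (simp add: add_ac)
  then show ?case using Cons[of "\<lambda>y. f (y + a) + f y" "\<lambda>y. g (y + a) + g y"] by simp
qed

lemma cube_zero: "cube (\<lambda>y. 0) x as = 0"
  by (induction as) simp_all

lemma cube_const: assumes c2: "(1::'a::field) + 1 = 0"
  shows "as \<noteq> [] \<Longrightarrow> cube (\<lambda>y. c::'a) x as = 0"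
  by (cases as) (simp_all add: c2_double[OF c2] cube_zero)

lemma cube_cmult: "cube (\<lambda>y. c * f y) x as = c * cube f x as"
proof (induction as arbitrary: f)
  case Nil then show ?case by simp
next
  case (Cons a as)
  have "(\<lambda>y. c * f (y + a) + c * f y) = (\<lambda>y. c * (f (y + a) + f y))"
    by (rule ext) (simp add: distrib_left)
  then show ?case using Cons[of "\<lambda>y. f (y + a) + f y"] by simp
qed

lemma cube_sum: "finite I \<Longrightarrow> cube (\<lambda>y. \<Sum>i\<in>I. f i y) x as = (\<Sum>i\<in>I. cube (f i) x as)"
proof (induction I rule: finite_induct)
  case empty then show ?case by (simp add: cube_zero)
next
  case (insert i I)
  then show ?case using cube_add[of "f i" "\<lambda>y. \<Sum>i\<in>I. f i y" x as] by simp
qed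

lemma cube_shift: "cube (\<lambda>y. g (y + b)) x as = cube g (x + b) as"
proof (induction as arbitrary: g)
  case Nil then show ?case by simp
next
  case (Cons a as)
  have e: "(\<lambda>y. g (y + a + b) + g (y + b)) = (\<lambda>y. g (y + b + a) + g (y + b))"
    by (rule ext) (simp add: add_ac)
  show ?case by (simp only: cube.simps e Cons.IH[of "\<lambda>z. g (z + a) + g z"])
qed

lemma cube_prod_vanish:
  fixes L :: "nat \<Rightarrow> 'a::field \<Rightarrow> 'a"
  assumes c2: "(1::'a) + 1 = 0" and add: "\<And>i x y. L i (x + y) = L i x + L i y"
  shows "finite M \<Longrightarrow> card M < length as \<Longrightarrow> cube (\<lambda>y. \<Prod>i\<in>M. L i y) x as = 0"
proof (induction as arbitrary: M)
  case Nil then show ?case by simp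
next
  case (Cons a as)
  have eq: "(\<lambda>y. (\<Prod>i\<in>M. L i (y + a)) + (\<Prod>i\<in>M. L i y))
      = (\<lambda>y. \<Sum>B\<in>Pow M - {M}. (\<Prod>i\<in>M - B. L i a) * (\<Prod>i\<in>B. L i y))"
  proof (rule ext)
    fix y
    have "(\<Prod>i\<in>M. L i (y + a)) = (\<Prod>i\<in>M. L i y + L i a)" by (simp add: add)
    also have "\<dots> = (\<Sum>B\<in>Pow M. (\<Prod>i\<in>B. L i y) * (\<Prod>i\<in>M - B. L i a))"
      by (rule prod_add[OF Cons.prems(1)])
    also have "\<dots> = (\<Sum>B\<in>Pow M - {M}. (\<Prod>i\<in>B. L i y) * (\<Prod>i\<in>M - B. L i a)) + (\<Prod>i\<in>M. L i y)"
      using Cons.prems(1) by (subst sum.remove[of _ M]) (auto simp: add.commute)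
    finally show "(\<Prod>i\<in>M. L i (y + a)) + (\<Prod>i\<in>M. L i y)
      = (\<Sum>B\<in>Pow M - {M}. (\<Prod>i\<in>M - B. L i a) * (\<Prod>i\<in>B. L i y))"
      using c2_double[OF c2, of "\<Prod>i\<in>M. L i y"] by (simp add: add.assoc mult.commute)
  qed
  have "cube (\<lambda>y. \<Prod>i\<in>M. L i y) x (a # as)
      = (\<Sum>B\<in>Pow M - {M}. (\<Prod>i\<in>M - B. L i a) * cube (\<lambda>y. \<Prod>i\<in>B. L i y) x as)"
    using Cons.prems(1) by (simp add: eq cube_sum cube_cmult)
  also have "\<dots> = 0"
  proof (rule sum.neutral, rule ballI)
    fix B assume B: "B \<in> Pow M - {M}"
    hence "B \<subset> M" by auto
    hence "card B < card M" using Cons.prems(1) by (rule psubset_card_mono[rotated])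
    hence "card B < length as" using Cons.prems(2) by simp
    moreover have "finite B" using B Cons.prems(1) finite_subset by auto
    ultimately show "(\<Prod>i\<in>M - B. L i a) * cube (\<lambda>y. \<Prod>i\<in>B. L i y) x as = 0"
      using Cons.IH by simp
  qed
  finally show ?case .
qed

lemma cube_prod_unit:
  fixes L :: "nat \<Rightarrow> 'a::field \<Rightarrow> 'a" and dir :: "nat \<Rightarrow> 'a"
  assumes c2: "(1::'a) + 1 = 0" and add: "\<And>i x y. L i (x + y) = L i x + L i y"
  shows "finite M \<Longrightarrow> distinct ms \<Longrightarrow> (\<forall>m\<in>set ms. \<forall>i\<in>M. L i (dir m) = (if i = m then 1 else 0)) \<Longrightarrow>
    cube (\<lambda>y. \<Prod>i\<in>M. L i y) x (map dir ms) = (if set ms \<subseteq> M then (\<Prod>i\<in>M - set ms. L i x) else 0)"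
proof (induction ms arbitrary: M)
  case Nil then show ?case by simp
next
  case (Cons m ms)
  show ?case
  proof (cases "m \<in> M")
    case True
    have eq: "(\<lambda>y. (\<Prod>i\<in>M. L i (y + dir m)) + (\<Prod>i\<in>M. L i y)) = (\<lambda>y. \<Prod>i\<in>M - {m}. L i y)"
    proof (rule ext)
      fix y
      have "(\<Prod>i\<in>M. L i (y + dir m)) = L m (y + dir m) * (\<Prod>i\<in>M - {m}. L i (y + dir m))"
        using Cons.prems(1) True by (rule prod.remove)
      also have "(\<Prod>i\<in>M - {m}. L i (y + dir m)) = (\<Prod>i\<in>M - {m}. L i y)"
        using Cons.prems(3) by (intro prod.cong refl) (simp add: add)
      also have "L m (y + dir m) = L m y + 1" using Cons.prems(3) True by (simp add: add)
      finally have "(\<Prod>i\<in>M. L i (y + dir m)) = (L m y + 1) * (\<Prod>i\<in>M - {m}. L i y)" .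
      moreover have "(\<Prod>i\<in>M. L i y) = L m y * (\<Prod>i\<in>M - {m}. L i y)"
        using Cons.prems(1) True by (rule prod.remove)
      ultimately show "(\<Prod>i\<in>M. L i (y + dir m)) + (\<Prod>i\<in>M. L i y) = (\<Prod>i\<in>M - {m}. L i y)"
        using c2_double[OF c2, of "L m y * (\<Prod>i\<in>M - {m}. L i y)"]
        by (simp add: distrib_right add_ac)
    qed
    have IH: "cube (\<lambda>y. \<Prod>i\<in>M - {m}. L i y) x (map dir ms) =
        (if set ms \<subseteq> M - {m} then (\<Prod>i\<in>M - {m} - set ms. L i x) else 0)"
      using Cons.prems by (intro Cons.IH) auto
    have m: "m \<notin> set ms" using Cons.prems(2) by simp
    have "M - {m} - set ms = M - set (m # ms)" by auto
    moreover have "(set ms \<subseteq> M - {m}) = (set (m # ms) \<subseteq> M)" using m True by auto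
    ultimately show ?thesis using IH eq by simp
  next
    case False
    have eq: "(\<lambda>y. (\<Prod>i\<in>M. L i (y + dir m)) + (\<Prod>i\<in>M. L i y)) = (\<lambda>y. 0)"
    proof (rule ext)
      fix y
      have "(\<Prod>i\<in>M. L i (y + dir m)) = (\<Prod>i\<in>M. L i y)"
        using Cons.prems(3) False by (intro prod.cong refl) (auto simp add: add)
      thus "(\<Prod>i\<in>M. L i (y + dir m)) + (\<Prod>i\<in>M. L i y) = 0" by (simp add: c2_double[OF c2])
    qed
    show ?thesis using False eq by (simp add: cube_zero)
  qed
qed

lemma cube_mobius:
  fixes L :: "nat \<Rightarrow> 'a::field \<Rightarrow> 'a" and dir :: "nat \<Rightarrow> 'a"
  assumes c2: "(1::'a) + 1 = 0" and add: "\<And>i x y. L i (x + y) = L i x + L i y"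
    and P: "finite P" "\<forall>M'\<in>P. finite M'"
    and ms: "distinct ms" "set ms = M"
    and dir: "\<forall>m\<in>M. \<forall>M'\<in>P. \<forall>i\<in>M'. L i (dir m) = (if i = m then 1 else 0)"
  shows "cube (\<lambda>y. \<Sum>M'\<in>P. \<Prod>i\<in>M'. L i y) 0 (map dir ms) = (if M \<in> P then 1 else 0)"
proof -
  have l0: "L i 0 = 0" for i using add[of i 0 0] by (metis add.right_neutral add_left_cancel)
  have "cube (\<lambda>y. \<Sum>M'\<in>P. \<Prod>i\<in>M'. L i y) 0 (map dir ms) = (\<Sum>M'\<in>P. cube (\<lambda>y. \<Prod>i\<in>M'. L i y) 0 (map dir ms))"
    by (rule cube_sum[OF P(1)])
  also have "\<dots> = (\<Sum>M'\<in>P. if M' = M then 1 else 0)"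
  proof (rule sum.cong[OF refl])
    fix M' assume M': "M' \<in> P"
    have "cube (\<lambda>y. \<Prod>i\<in>M'. L i y) 0 (map dir ms) = (if set ms \<subseteq> M' then (\<Prod>i\<in>M' - set ms. L i 0) else 0)"
      by (rule cube_prod_unit[OF c2 add]) (use P M' ms dir in auto)
    also have "\<dots> = (if M' = M then 1 else 0)"
    proof (cases "M \<subseteq> M' \<and> M' \<subseteq> M")
      case True then show ?thesis using ms by auto
    next
      case False
      show ?thesis
      proof (cases "M \<subseteq> M'")
        case True
        with False obtain i where "i \<in> M' - M" by auto
        hence "(\<Prod>i\<in>M' - M. L i 0) = 0" using P M' by (intro prod_zero) (auto simp: l0)
        then show ?thesis using True False ms by auto
      qed (use ms in auto)
    qed
    finally show "cube (\<lambda>y. \<Prod>i\<in>M'. L i y) 0 (map dir ms) = (if M' = M then 1 else 0)" .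
  qed
  also have "\<dots> = (if M \<in> P then 1 else 0)" using P(1) by (simp add: sum.delta')
  finally show ?thesis .
qed


definition lc :: "(nat \<Rightarrow> 'a::field) \<Rightarrow> nat \<Rightarrow> nat \<Rightarrow> 'a \<Rightarrow> 'a" where
  "lc b m i x = (if i \<in> coords b m x then 1 else 0)"

context
  assumes c2: "(1::'a::field) + 1 = 0"
begin

lemma sum_symdiff: "finite A \<Longrightarrow> finite B \<Longrightarrow>
  sum f A + sum f B = sum (f :: nat \<Rightarrow> 'a) ((A - B) \<union> (B - A))"
proof -
  assume A: "finite A" and B: "finite B"
  have "sum f A = sum f (A \<inter> B) + sum f (A - B)" using A by (rule sum.Int_Diff)
  moreover have "sum f B = sum f (A \<inter> B) + sum f (B - A)" using B by (metis sum.Int_Diff inf_commute)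
  moreover have "sum f ((A - B) \<union> (B - A)) = sum f (A - B) + sum f (B - A)"
    using A B by (intro sum.union_disjoint) auto
  ultimately show ?thesis using c2_double[OF c2, of "sum f (A \<inter> B)"]
    by (simp add: add_ac)
qed


context
  fixes b :: "nat \<Rightarrow> 'a" and m :: nat and V :: "'a set"
  assumes basis: "F2_basis b m V"
begin

lemma coords_sum: "T \<subseteq> {..<m} \<Longrightarrow> coords b m (\<Sum>i\<in>T. b i) = T"
  unfolding coords_def
proof (rule the_equality)
  fix T' assume T: "T \<subseteq> {..<m}" and T': "T' \<subseteq> {..<m} \<and> (\<Sum>i\<in>T'. b i) = (\<Sum>i\<in>T. b i)"
  have "inj_on (\<lambda>T. \<Sum>i\<in>T. b i) (Pow {..<m})" using basis unfolding F2_basis_def by (rule bij_betw_imp_inj_on)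
  thus "T' = T" using T T' by (auto dest: inj_onD)
qed simp

lemma coords_in: "x \<in> V \<Longrightarrow> coords b m x \<subseteq> {..<m} \<and> (\<Sum>i\<in>coords b m x. b i) = x"
proof -
  assume "x \<in> V"
  then obtain T where T: "T \<in> Pow {..<m}" "x = (\<Sum>i\<in>T. b i)"
    using basis unfolding F2_basis_def bij_betw_def by auto
  thus ?thesis using coords_sum[of T] by auto
qed

lemma coords_add: "x \<in> V \<Longrightarrow> y \<in> V \<Longrightarrow> x + y \<in> V \<Longrightarrow>
   coords b m (x + y) = (coords b m x - coords b m y) \<union> (coords b m y - coords b m x)"
proof -
  assume x: "x \<in> V" and y: "y \<in> V" and xy: "x + y \<in> V"
  let ?X = "coords b m x" and ?Y = "coords b m y"
  have fx: "finite ?X" "finite ?Y" using coords_in[OF x] coords_in[OF y] finite_subset by auto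
  have "x + y = (\<Sum>i\<in>(?X - ?Y) \<union> (?Y - ?X). b i)"
    using coords_in[OF x] coords_in[OF y] sum_symdiff[OF fx, of b] by simp
  moreover have "(?X - ?Y) \<union> (?Y - ?X) \<subseteq> {..<m}" using coords_in[OF x] coords_in[OF y] by auto
  ultimately show ?thesis using coords_sum by simp
qed

lemma lc_add: "x \<in> V \<Longrightarrow> y \<in> V \<Longrightarrow> x + y \<in> V \<Longrightarrow> lc b m i (x + y) = lc b m i x + lc b m i y"
  unfolding lc_def using coords_add c2 by auto

lemma lc_basis: "j < m \<Longrightarrow> lc b m i (b j) = (if i = j then 1 else 0)"
  unfolding lc_def using coords_sum[of "{j}"] by auto

lemma lc_zero: "lc b m i 0 = 0"
  unfolding lc_def using coords_sum[of "{}"] by auto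

lemma card_basis: "card V = 2 ^ m"
  using bij_betw_same_card[OF basis[unfolded F2_basis_def]] by (simp add: card_Pow)

end

lemma of_bool_odd: "(of_bool (odd j) :: 'a) = of_nat j"
proof -
  have two: "(2::'a) = 0" using c2 by (simp add: one_add_one)
  show ?thesis by (induction j) (auto simp: two add.commute)
qed

lemma prod_indicator: "finite M \<Longrightarrow> (\<Prod>i\<in>M. (if \<beta> i then 1 else 0 :: 'a)) = (if \<forall>i\<in>M. \<beta> i then 1 else 0)"
  by (induction M rule: finite_induct) auto

lemma anf_eval: assumes "finite P" "\<forall>M\<in>P. finite M"
  shows "(of_bool (poly_eval P \<beta>) :: 'a) = (\<Sum>M\<in>P. \<Prod>i\<in>M. (if \<beta> i then 1 else 0))"
proof -
  have "(of_bool (poly_eval P \<beta>) :: 'a) = of_nat (card {M\<in>P. \<forall>i\<in>M. \<beta> i})"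
    unfolding poly_eval_def by (rule of_bool_odd)
  also have "\<dots> = (\<Sum>M\<in>P. if \<forall>i\<in>M. \<beta> i then 1 else 0)"
  proof -
    have "{M\<in>P. \<forall>i\<in>M. \<beta> i} = P \<inter> {M. \<forall>i\<in>M. \<beta> i}" by auto
    thus ?thesis using assms(1) by (simp add: sum.If_cases)
  qed
  also have "\<dots> = (\<Sum>M\<in>P. \<Prod>i\<in>M. (if \<beta> i then 1 else 0))"
    using assms(2) by (intro sum.cong refl) (simp add: prod_indicator)
  finally show ?thesis .
qed

end

context
  fixes e :: "nat \<Rightarrow> 'a::field" and n :: nat
  assumes c2: "(1::'a) + 1 = 0" and eb: "F2_basis e n UNIV"
begin

lemma lcU_add: "lc e n i (x + y) = lc e n i x + lc e n i y"
  by (rule lc_add[OF c2 eb]) auto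

lemma rep_fin: "represents e n g P \<Longrightarrow> finite P \<and> (\<forall>M\<in>P. finite M \<and> M \<subseteq> {..<n})"
  unfolding represents_def by (auto intro: finite_subset)

lemma rep_eval: assumes "represents e n g P"
  shows "(of_bool (g x) :: 'a) = (\<Sum>M\<in>P. \<Prod>i\<in>M. lc e n i x)"
proof -
  let ?T = "coords e n x"
  have T: "?T \<subseteq> {..<n}" "(\<Sum>i\<in>?T. e i) = x" using coords_in[OF c2 eb, of x] by auto
  have "g x = poly_eval P (\<lambda>i. i \<in> ?T)" using assms T unfolding represents_def by metis
  hence "(of_bool (g x) :: 'a) = (\<Sum>M\<in>P. \<Prod>i\<in>M. (if i \<in> ?T then 1 else 0))"
    using anf_eval[OF c2] rep_fin[OF assms] by simp
  thus ?thesis by (simp add: lc_def)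
qed

lemma cube_rep: assumes "represents e n g P" and M: "M \<subseteq> {..<n}"
  shows "cube (\<lambda>y. of_bool (g y)) 0 (map e (sorted_list_of_set M)) = (if M \<in> P then 1 else (0::'a))"
proof -
  have fM: "finite M" using M finite_subset by auto
  have "(\<lambda>y. (of_bool (g y) :: 'a)) = (\<lambda>y. \<Sum>M\<in>P. \<Prod>i\<in>M. lc e n i y)"
    using rep_eval[OF assms(1)] by auto
  moreover have "cube (\<lambda>y. \<Sum>M\<in>P. \<Prod>i\<in>M. lc e n i y) 0 (map e (sorted_list_of_set M)) = (if M \<in> P then 1 else 0)"
  proof (rule cube_mobius[OF c2 lcU_add])
    show "finite P" "\<forall>M'\<in>P. finite M'" using rep_fin[OF assms(1)] by auto
    show "distinct (sorted_list_of_set M)" "set (sorted_list_of_set M) = M" using fM by auto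
    show "\<forall>m\<in>M. \<forall>M'\<in>P. \<forall>i\<in>M'. lc e n i (e m) = (if i = m then 1 else 0)"
      using M lc_basis[OF c2 eb] by auto
  qed
  ultimately show ?thesis by simp
qed

lemma rep_unique: assumes "represents e n g P" "represents e n g P'" shows "P = P'"
proof (rule set_eqI)
  fix M
  show "M \<in> P \<longleftrightarrow> M \<in> P'"
  proof (cases "M \<subseteq> {..<n}")
    case True
    have "(if M \<in> P then 1 else (0::'a)) = (if M \<in> P' then 1 else 0)"
      using cube_rep[OF assms(1) True] cube_rep[OF assms(2) True] by simp
    thus ?thesis by (auto split: if_splits)
  next
    case False
    thus ?thesis using assms unfolding represents_def by auto
  qed
qed

lemma rep_exists: "\<exists>P. represents e n g P"
proof -
  define \<Phi> where "\<Phi> P = {T\<in>Pow {..<n}. poly_eval P (\<lambda>i. i \<in> T)}" for P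
  have repP: "represents e n (\<lambda>x. coords e n x \<in> \<Phi> P) P" if "P \<in> Pow (Pow {..<n})" for P
    using that coords_sum[OF c2 eb] unfolding represents_def \<Phi>_def by auto
  have inj: "inj_on \<Phi> (Pow (Pow {..<n}))"
  proof (rule inj_onI)
    fix P P' assume P: "P \<in> Pow (Pow {..<n})" and P': "P' \<in> Pow (Pow {..<n})" and eq: "\<Phi> P = \<Phi> P'"
    show "P = P'" using rep_unique[OF repP[OF P] repP[OF P', folded eq]] .
  qed
  have "\<Phi> ` Pow (Pow {..<n}) = Pow (Pow {..<n})"
    by (rule endo_inj_surj[OF _ _ inj]) (auto simp: \<Phi>_def)
  moreover define X where "X = {T\<in>Pow {..<n}. g (\<Sum>i\<in>T. e i)}"
  ultimately obtain P where P: "P \<in> Pow (Pow {..<n})" "\<Phi> P = X"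
    by (metis (no_types, lifting) X_def image_iff mem_Collect_eq Pow_iff subsetI)
  have "represents e n g P"
    unfolding represents_def
  proof (intro conjI allI impI)
    show "P \<subseteq> Pow {..<n}" using P by auto
    fix T assume "T \<subseteq> {..<n}"
    thus "g (\<Sum>i\<in>T. e i) = poly_eval P (\<lambda>i. i \<in> T)"
      using P(2) unfolding X_def \<Phi>_def by blast
  qed
  thus ?thesis ..
qed

lemma rep_the: "represents e n g (THE P. represents e n g P)"
  using rep_exists rep_unique by (metis theI)

lemma deg_upper:
  assumes "\<forall>x as. r < length as \<longrightarrow> cube (\<lambda>y. of_bool (g y)) x as = (0::'a)"
  shows "bool_alg_degree e n g \<le> r"
proof -
  let ?P = "THE P. represents e n g P"
  have R: "represents e n g ?P" by (rule rep_the)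
  have "card M \<le> r" if M: "M \<in> ?P" for M
  proof (rule ccontr)
    assume "\<not> card M \<le> r"
    moreover have Mn: "M \<subseteq> {..<n}" using R M unfolding represents_def by auto
    moreover have "length (map e (sorted_list_of_set M)) = card M" by simp
    ultimately have "cube (\<lambda>y. of_bool (g y)) 0 (map e (sorted_list_of_set M)) = (0::'a)"
      using assms by auto
    thus False using cube_rep[OF R Mn] M by simp
  qed
  moreover have "finite ?P" using rep_fin[OF R] by auto
  ultimately show ?thesis unfolding bool_alg_degree_def poly_degree_def by simp
qed

lemma deg_vanish:
  assumes "bool_alg_degree e n g < length as"
  shows "cube (\<lambda>y. of_bool (g y)) x as = (0::'a)"
proof -
  let ?P = "THE P. represents e n g P"
  have R: "represents e n g ?P" by (rule rep_the)
  have fP: "finite ?P" "\<forall>M\<in>?P. finite M" using rep_fin[OF R] by auto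
  have "(\<lambda>y. (of_bool (g y) :: 'a)) = (\<lambda>y. \<Sum>M\<in>?P. \<Prod>i\<in>M. lc e n i y)"
    using rep_eval[OF R] by auto
  hence "cube (\<lambda>y. of_bool (g y)) x as = (\<Sum>M\<in>?P. cube (\<lambda>y. \<Prod>i\<in>M. lc e n i y) x as)"
    using cube_sum[OF fP(1)] by simp
  also have "\<dots> = 0"
  proof (rule sum.neutral, rule ballI)
    fix M assume M: "M \<in> ?P"
    have "card M \<le> poly_degree ?P" unfolding poly_degree_def using fP(1) M by (intro Max_ge) auto
    hence "card M < length as" using assms unfolding bool_alg_degree_def by simp
    thus "cube (\<lambda>y. \<Prod>i\<in>M. lc e n i y) x as = 0"
      using cube_prod_vanish[where L="lc e n", OF c2 lcU_add] fP M by blast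
  qed
  finally show ?thesis .
qed

end

lemma tr_sum: assumes c2: "(1::'a::field) + 1 = 0"
  shows "tr m (\<Sum>i\<in>I. f i) = (\<Sum>i\<in>I. tr m (f i :: 'a))"
proof (induction I rule: infinite_finite_induct)
  case (insert x F) then show ?case by (simp add: tr_add[OF c2])
qed auto

lemma tr_scal: assumes "c = 0 \<or> c = 1"
  shows "tr m (a * (c * b)) = c * tr m (a * (b::'a::field))"
  using assms by auto

context
  fixes k :: nat
  assumes card: "card (UNIV :: 'a::{field,finite} set) = 2 ^ (2 * k)" and k1: "k \<ge> 1"
begin

lemmas c2k = cc2[OF card k1]
lemmas frobq2k = frobq2[OF card k1]

lemma relTr_surj:
  fixes w :: "nat \<Rightarrow> 'a"
  assumes wb: "F2_basis w k (subF k)" and y: "(y::'a) \<in> subF k"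
  shows "\<exists>a::'a. a + a ^ (2 ^ k) = y"
proof -
  define Tq where "Tq a = a + a ^ (2 ^ k)" for a :: 'a
  have Tq_add: "Tq (a + b) = Tq a + Tq b" for a b
    unfolding Tq_def by (simp add: frob_pow[OF c2k] add_ac)
  have Tq_in: "Tq a \<in> subF k" for a
    unfolding Tq_def subF_def by (simp add: frob_pow[OF c2k] frobq2k add.commute)
  define K where "K = {a::'a. Tq a = 0}"
  have K: "K = subF k"
  proof -
    have "Tq a = 0 \<longleftrightarrow> a ^ (2 ^ k) = a" for a
      unfolding Tq_def using c2_minus[OF c2k, of a] by (metis add_eq_0_iff)
    thus ?thesis unfolding K_def subF_def by auto
  qed
  have cK: "card K = 2 ^ k" unfolding K using card_basis[OF c2k wb] .
  have fib: "card {a. Tq a = z} = 2 ^ k" if "z \<in> range Tq" for z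
  proof -
    from that obtain a0 where a0': "z = Tq a0" by (rule rangeE)
    hence a0: "Tq a0 = z" by simp
    have "{a. Tq a = z} = (\<lambda>b. b + a0) ` K"
    proof (rule set_eqI, rule iffI)
      fix a assume "a \<in> {a. Tq a = z}"
      hence "Tq (a + a0) = 0" using a0 Tq_add c2_double[OF c2k] by simp
      moreover have "a = (a + a0) + a0" using c2_double[OF c2k, of a0] by (simp add: add.assoc)
      ultimately show "a \<in> (\<lambda>b. b + a0) ` K" unfolding K_def by blast
    next
      fix a assume "a \<in> (\<lambda>b. b + a0) ` K"
      then obtain b where "b \<in> K" "a = b + a0" by auto
      thus "a \<in> {a. Tq a = z}" using a0 Tq_add unfolding K_def by simp
    qed
    moreover have "inj_on (\<lambda>b. b + a0) K" by (rule inj_onI) simp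
    ultimately show ?thesis using cK card_image[of "\<lambda>b. b + a0" K] by simp
  qed
  have "(UNIV::'a set) = (\<Union>z\<in>range Tq. {a. Tq a = z})" by auto
  moreover have "card (\<Union>z\<in>range Tq. {a. Tq a = z}) = (\<Sum>z\<in>range Tq. card {a. Tq a = z})"
    by (rule card_UN_disjoint) auto
  ultimately have "card (UNIV::'a set) = (\<Sum>z\<in>range Tq. card {a. Tq a = z})" by simp
  also have "\<dots> = card (range Tq) * 2 ^ k" using fib by simp
  finally have "card (range Tq) * 2 ^ k = 2 ^ k * (2::nat) ^ k" using card by (simp add: power_add mult_2)
  hence "card (range Tq) = card (subF k :: 'a set)" using card_basis[OF c2k wb] by simp
  moreover have "range Tq \<subseteq> subF k" using Tq_in by auto
  ultimately have "range Tq = subF k" by (intro card_subset_eq) auto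
  hence "y \<in> range Tq" using y by simp
  then obtain a where "y = Tq a" by (rule rangeE)
  thus ?thesis unfolding Tq_def by blast
qed


lemmas trn01k = trn01[OF card k1]

lemma tr_lin: "tr (2 * k) (a * (y + c * b)) = tr (2 * k) (a * y) + c * tr (2 * k) (a * b)"
  if "c = 0 \<or> c = 1" for a y b c :: 'a
  using that by (auto simp: distrib_left tr_add[OF c2k])

lemma tr_lin_sum: "tr (2 * k) (a * (y + (\<Sum>i\<in>I. c i * b i))) = tr (2 * k) (a * y) + (\<Sum>i\<in>I. c i * tr (2 * k) (a * b i))"
  if "\<forall>i. c i = 0 \<or> c i = 1" for a y :: 'a and b c :: "nat \<Rightarrow> 'a" and I :: "nat set"
proof -
  have "tr (2 * k) (a * (y + (\<Sum>i\<in>I. c i * b i))) = tr (2 * k) (a * y) + (\<Sum>i\<in>I. tr (2 * k) (a * (c i * b i)))"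
    by (simp add: distrib_left sum_distrib_left tr_add[OF c2k] tr_sum[OF c2k])
  also have "(\<Sum>i\<in>I. tr (2 * k) (a * (c i * b i))) = (\<Sum>i\<in>I. c i * tr (2 * k) (a * b i))"
    using that by (intro sum.cong refl tr_scal) auto
  finally show ?thesis .
qed

lemma dual_dirs:
  fixes v :: "nat \<Rightarrow> 'a" and \<tau> :: nat
  assumes indep: "F2_lin_indep v \<tau>"
  shows "t \<le> \<tau> \<Longrightarrow> \<exists>dir::nat \<Rightarrow> 'a. \<forall>m<t. \<forall>i<t. tr (2 * k) (v i * dir m) = (if i = m then 1 else 0)"
proof (induction t)
  case 0 show ?case by simp
next
  case (Suc t)
  let ?n = "2 * k"
  obtain dir where dir: "\<forall>m<t. \<forall>i<t. tr ?n (v i * dir m) = (if i = m then 1 else 0)"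
    using Suc by auto
  have t: "t < \<tau>" using Suc.prems by simp
  have ex: "\<exists>y. (\<forall>i<t. tr ?n (v i * y) = 0) \<and> tr ?n (v t * y) = 1"
  proof (rule ccontr)
    assume nex: "\<not> ?thesis"
    have H: "tr ?n (v t * y) = 0" if "\<forall>i<t. tr ?n (v i * y) = 0" for y
      using nex that trn01k[of "v t * y"] by blast
    define lam where "lam i = tr ?n (v t * dir i)" for i
    have lam01: "\<forall>i. lam i = 0 \<or> lam i = 1" unfolding lam_def using trn01k by blast
    define u where "u = 0 + (\<Sum>i<t. lam i * v i)"
    have uy: "tr ?n ((v t + u) * y) = 0" for y
    proof -
      define c where "c i = tr ?n (v i * y)" for i
      have c01: "\<forall>i. c i = 0 \<or> c i = 1" unfolding c_def using trn01k by blast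
      define y0 where "y0 = y + (\<Sum>i<t. c i * dir i)"
      have "tr ?n (v j * y0) = 0" if j: "j < t" for j
      proof -
        have "tr ?n (v j * y0) = tr ?n (v j * y) + (\<Sum>i<t. c i * tr ?n (v j * dir i))"
          unfolding y0_def by (rule tr_lin_sum[OF c01])
        also have "(\<Sum>i<t. c i * tr ?n (v j * dir i)) = (\<Sum>i<t. if i = j then c i else 0)"
          using dir j by (intro sum.cong refl) auto
        also have "\<dots> = c j" using j by simp
        finally show ?thesis unfolding c_def using c2_double[OF c2k] by simp
      qed
      hence "tr ?n (v t * y0) = 0" by (intro H) auto
      moreover have "tr ?n (v t * y0) = tr ?n (v t * y) + (\<Sum>i<t. c i * lam i)"
        unfolding y0_def lam_def by (rule tr_lin_sum[OF c01])
      moreover have "tr ?n ((v t + u) * y) = tr ?n (v t * y) + (\<Sum>i<t. lam i * c i)"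
      proof -
        have "tr ?n ((v t + u) * y) = tr ?n (y * (v t + (\<Sum>i<t. lam i * v i)))"
          unfolding u_def by (simp add: mult.commute)
        also have "\<dots> = tr ?n (y * v t) + (\<Sum>i<t. lam i * tr ?n (y * v i))"
          by (rule tr_lin_sum[OF lam01])
        finally show ?thesis unfolding c_def by (simp add: mult.commute)
      qed
      ultimately show ?thesis by (simp add: mult.commute)
    qed
    have u0: "v t + u = 0"
    proof (rule ccontr)
      assume nz: "v t + u \<noteq> 0"
      obtain x0 :: 'a where x0: "tr ?n x0 \<noteq> 0" using tr_nonzero[OF card n1[OF card k1]] by blast
      have "(v t + u) * (x0 / (v t + u)) = x0" using nz by simp
      thus False using uy[of "x0 / (v t + u)"] x0 by simp
    qed
    define \<Lambda> where "\<Lambda> = {i\<in>{..<t}. lam i = 1}"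
    have "u = (\<Sum>i\<in>{..<t}. if lam i = 1 then v i else 0)"
      unfolding u_def add_0_left
    proof (rule sum.cong[OF refl])
      fix i
      show "lam i * v i = (if lam i = 1 then v i else 0)" using lam01[rule_format, of i] by auto
    qed
    also have "\<dots> = (\<Sum>i\<in>\<Lambda>. v i)" unfolding \<Lambda>_def by (rule sum.inter_filter[symmetric]) simp
    finally have "(\<Sum>i\<in>insert t \<Lambda>. v i) = 0" using u0 by (simp add: \<Lambda>_def)
    moreover have "insert t \<Lambda> \<in> Pow {..<\<tau>}" "{} \<in> Pow {..<\<tau>}" using t unfolding \<Lambda>_def by auto
    moreover have inj: "inj_on (\<lambda>T. \<Sum>i\<in>T. v i) (Pow {..<\<tau>})" using indep unfolding F2_lin_indep_def .
    ultimately have "insert t \<Lambda> = {}" using inj_onD[OF inj, of "insert t \<Lambda>" "{}"] by simp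
    thus False by simp
  qed
  then obtain y where y: "\<forall>i<t. tr ?n (v i * y) = 0" "tr ?n (v t * y) = 1" by blast
  define dir' where "dir' m = (if m = t then y else dir m + tr ?n (v t * dir m) * y)" for m
  show ?case
  proof (rule exI[of _ dir'], intro allI impI)
    fix m i assume m: "m < Suc t" and i: "i < Suc t"
    show "tr ?n (v i * dir' m) = (if i = m then 1 else 0)"
    proof (cases "m = t")
      case True
      then show ?thesis using y i unfolding dir'_def by auto
    next
      case False
      hence mt: "m < t" using m by simp
      have "tr ?n (v i * dir' m) = tr ?n (v i * dir m) + tr ?n (v t * dir m) * tr ?n (v i * y)"
        unfolding dir'_def using False by (simp add: tr_lin trn01k)
      then show ?thesis
      proof (cases "i = t")
        case True
        thus ?thesis using \<open>tr ?n (v i * dir' m) = _\<close> y mt c2_double[OF c2k] by simp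
      next
        case False
        hence "i < t" using i by simp
        thus ?thesis using \<open>tr ?n (v i * dir' m) = _\<close> y mt dir by simp
      qed
    qed
  qed
qed

definition Qf :: "nat \<Rightarrow> 'a \<Rightarrow> 'a \<Rightarrow> 'a" where "Qf q y a = y ^ q * a + y * a ^ q"

lemma Qf_subF: "Qf (2 ^ k) y a \<in> subF k"
  unfolding Qf_def subF_def
  by (simp add: frob_pow[OF c2k] power_mult_distrib frobq2k add.commute mult.commute)

lemma Qf_add: "Qf (2 ^ k) (y + b) a = Qf (2 ^ k) y a + Qf (2 ^ k) b a"
  unfolding Qf_def by (simp add: frob_pow[OF c2k] algebra_simps)

context
  fixes \<pi> :: "'a \<Rightarrow> 'a"
  assumes \<pi>add: "\<And>x y. x \<in> subF k \<Longrightarrow> y \<in> subF k \<Longrightarrow> \<pi> (x + y) = \<pi> x + \<pi> y"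
begin

lemma piN_D: "\<pi> ((y + a) ^ (2 ^ k + 1)) + \<pi> (y ^ (2 ^ k + 1)) = \<pi> (a ^ (2 ^ k + 1)) + \<pi> (Qf (2 ^ k) y a)"
proof -
  have "(y + a) ^ (2 ^ k + 1) = (y ^ (2 ^ k + 1) + a ^ (2 ^ k + 1)) + Qf (2 ^ k) y a"
    unfolding Qf_def by (rule N_add[OF card k1])
  hence "\<pi> ((y + a) ^ (2 ^ k + 1)) = \<pi> (y ^ (2 ^ k + 1)) + \<pi> (a ^ (2 ^ k + 1)) + \<pi> (Qf (2 ^ k) y a)"
    using \<pi>add N_subF[OF card k1] Qf_subF subF_add[OF card k1] by simp
  thus ?thesis using c2_double[OF c2k, of "\<pi> (y ^ (2 ^ k + 1))"] by (simp add: add_ac)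
qed

lemma piN_fun: "(\<lambda>y. \<pi> ((y + a) ^ (2 ^ k + 1)) + \<pi> (y ^ (2 ^ k + 1))) = (\<lambda>y. \<pi> (a ^ (2 ^ k + 1)) + \<pi> (Qf (2 ^ k) y a))"
  using piN_D by auto

lemma piQ_fun: "(\<lambda>y. \<pi> (Qf (2 ^ k) (y + b) a) + \<pi> (Qf (2 ^ k) y a)) = (\<lambda>y. \<pi> (Qf (2 ^ k) b a))"
proof (rule ext)
  fix y
  have "\<pi> (Qf (2 ^ k) (y + b) a) = \<pi> (Qf (2 ^ k) y a) + \<pi> (Qf (2 ^ k) b a)"
    unfolding Qf_add using \<pi>add Qf_subF by simp
  thus "\<pi> (Qf (2 ^ k) (y + b) a) + \<pi> (Qf (2 ^ k) y a) = \<pi> (Qf (2 ^ k) b a)"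
    using c2_double[OF c2k, of "\<pi> (Qf (2 ^ k) y a)"] by (simp add: add_ac)
qed

lemma cube_piN3: "3 \<le> length as \<Longrightarrow> cube (\<lambda>y. \<pi> (y ^ (2 ^ k + 1))) x as = 0"
proof -
  assume "3 \<le> length as"
  then obtain a b c rest where as: "as = a # b # c # rest"
    by (metis Suc_le_length_iff numeral_3_eq_3)
  have "cube (\<lambda>y. \<pi> (y ^ (2 ^ k + 1))) x as
      = cube (\<lambda>y. \<pi> (a ^ (2 ^ k + 1)) + \<pi> (Qf (2 ^ k) y a)) x (b # c # rest)"
    unfolding as by (simp only: cube.simps piN_fun)
  also have "\<dots> = cube (\<lambda>y. \<pi> (a ^ (2 ^ k + 1))) x (b # c # rest) + cube (\<lambda>y. \<pi> (Qf (2 ^ k) y a)) x (b # c # rest)"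
    by (rule cube_add)
  also have "cube (\<lambda>y. \<pi> (a ^ (2 ^ k + 1))) x (b # c # rest) = 0" by (rule cube_const[OF c2k]) simp
  also have "cube (\<lambda>y. \<pi> (Qf (2 ^ k) y a)) x (b # c # rest) = cube (\<lambda>y. \<pi> (Qf (2 ^ k) b a)) x (c # rest)"
    by (simp only: cube.simps piQ_fun)
  also have "\<dots> = 0" by (rule cube_const[OF c2k]) simp
  finally show ?thesis by simp
qed

lemma cube_piN2: "cube (\<lambda>y. \<pi> (y ^ (2 ^ k + 1))) x [a, b] = \<pi> (Qf (2 ^ k) b a)"
proof -
  have "cube (\<lambda>y. \<pi> (y ^ (2 ^ k + 1))) x [a, b] = cube (\<lambda>y. \<pi> (a ^ (2 ^ k + 1)) + \<pi> (Qf (2 ^ k) y a)) x [b]"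
    by (simp only: cube.simps piN_fun)
  also have "\<dots> = cube (\<lambda>y. \<pi> (a ^ (2 ^ k + 1))) x [b] + cube (\<lambda>y. \<pi> (Qf (2 ^ k) y a)) x [b]"
    by (rule cube_add)
  also have "cube (\<lambda>y. \<pi> (a ^ (2 ^ k + 1))) x [b] = 0" by (rule cube_const[OF c2k]) simp
  also have "cube (\<lambda>y. \<pi> (Qf (2 ^ k) y a)) x [b] = cube (\<lambda>y. \<pi> (Qf (2 ^ k) b a)) x []"
    by (simp only: cube.simps piQ_fun)
  finally show ?thesis by simp
qed

end

lemma degree_part:
  fixes v :: "nat \<Rightarrow> 'a" and S :: "nat set set" and \<tau> :: nat and e w :: "nat \<Rightarrow> 'a"
  assumes F: "reduced_poly \<tau> S" and indep: "F2_lin_indep v \<tau>" and d2: "poly_degree S \<ge> 2"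
    and eb: "F2_basis e (2 * k) UNIV" and wb: "F2_basis w k (subF k)" and tk: "\<tau> \<le> k"
  shows "vec_alg_degree e (2 * k) w k
     (\<lambda>x. x ^ (2 ^ k + 1) + (if poly_eval S (\<lambda>j. tr (2 * k) (v j * x) \<noteq> 0) then 1 else 0)) = poly_degree S"
proof -
  let ?n = "2 * k"
  let ?N = "\<lambda>x::'a. x ^ (2 ^ k + 1)"
  let ?P = "\<lambda>x. poly_eval S (\<lambda>j. tr ?n (v j * x) \<noteq> 0)"
  let ?H = "\<lambda>x. ?N x + (if ?P x then 1 else 0)"
  define d where "d = poly_degree S"
  define E where "E x = (of_bool (?P x) :: 'a)" for x
  define Lt where "Lt i y = tr ?n (v i * y)" for i y
  define g where "g j x = (j \<in> coords w k (?H x))" for j x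
  define D where "D j = bool_alg_degree e ?n (g j)" for j
  have c2: "(1::'a) + 1 = 0" by (rule c2k)
  have Sfin: "finite S" "\<forall>M\<in>S. finite M \<and> M \<subseteq> {..<\<tau>}"
    using F unfolding reduced_poly_def by (auto intro: finite_subset)
  have cardS: "card M \<le> d" if "M \<in> S" for M
    unfolding d_def poly_degree_def using Sfin that by (intro Max_ge) auto
  obtain M0 where M0: "M0 \<in> S" "card M0 = d"
  proof -
    have "d \<in> insert 0 (card ` S)" unfolding d_def poly_degree_def using Sfin by (intro Max_in) auto
    thus ?thesis using that d2 unfolding d_def by auto
  qed
  have Lt_add: "Lt i (x + y) = Lt i x + Lt i y" for i x y
    unfolding Lt_def by (simp add: distrib_left tr_add[OF c2])
  have E_eq: "E x = (\<Sum>M\<in>S. \<Prod>i\<in>M. Lt i x)" for x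
  proof -
    have "E x = (\<Sum>M\<in>S. \<Prod>i\<in>M. (if tr ?n (v i * x) \<noteq> 0 then 1 else 0))"
      unfolding E_def using anf_eval[OF c2] Sfin by simp
    also have "\<dots> = (\<Sum>M\<in>S. \<Prod>i\<in>M. Lt i x)"
    proof -
      have ind: "(if tr ?n z \<noteq> 0 then 1 else (0::'a)) = tr ?n (z::'a)" for z using trn01k[of z] by auto
      show ?thesis unfolding Lt_def by (simp only: ind)
    qed
    finally show ?thesis .
  qed
  have Efun: "(\<lambda>y. E y) = (\<lambda>y. \<Sum>M\<in>S. \<Prod>i\<in>M. Lt i y)" using E_eq by auto
  have cubeE_vanish: "cube E x as = 0" if "d < length as" for x as
  proof -
    have "cube E x as = cube (\<lambda>y. \<Sum>M\<in>S. \<Prod>i\<in>M. Lt i y) x as"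
      by (simp only: Efun[symmetric])
    also have "\<dots> = (\<Sum>M\<in>S. cube (\<lambda>y. \<Prod>i\<in>M. Lt i y) x as)"
      by (rule cube_sum[OF Sfin(1)])
    also have "\<dots> = 0"
    proof (rule sum.neutral, rule ballI)
      fix M assume M: "M \<in> S"
      have "card M < length as" using cardS[OF M] that by simp
      thus "cube (\<lambda>y. \<Prod>i\<in>M. Lt i y) x as = 0"
        by (intro cube_prod_vanish[where L=Lt, OF c2 Lt_add]) (use Sfin M in auto)
    qed
    finally show ?thesis .
  qed
  define \<pi> where "\<pi> j y = lc w k j y" for j y
  have \<pi>add: "\<pi> j (x + y) = \<pi> j x + \<pi> j y" if "x \<in> subF k" "y \<in> subF k" for j x y
    unfolding \<pi>_def by (rule lc_add[OF c2 wb]) (use that subF_add[OF card k1] in auto)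
  have ite_subF: "(if b then 1 else (0::'a)) \<in> subF k" for b
    using subF_0[OF card k1] subF_1[OF card k1] by auto
  have gfun: "(\<lambda>y. of_bool (g j y)) = (\<lambda>y. \<pi> j (?N y) + \<pi> j 1 * E y)" for j
  proof (rule ext)
    fix y
    have "(of_bool (g j y) :: 'a) = \<pi> j (?H y)" unfolding g_def \<pi>_def lc_def by simp
    also have "\<dots> = \<pi> j (?N y) + \<pi> j (if ?P y then 1 else 0)"
      by (rule \<pi>add[OF N_subF[OF card k1] ite_subF])
    also have "\<pi> j (if ?P y then 1 else 0) = \<pi> j 1 * E y"
      unfolding E_def \<pi>_def using lc_zero[OF c2 wb] by simp
    finally show "(of_bool (g j y) :: 'a) = \<pi> j (?N y) + \<pi> j 1 * E y" .
  qed
  have cube_g: "cube (\<lambda>y. of_bool (g j y)) x as = cube (\<lambda>y. \<pi> j (?N y)) x as + \<pi> j 1 * cube E x as" for j x as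
    unfolding gfun by (simp add: cube_add cube_cmult)
  have upper: "D j \<le> d" for j
    unfolding D_def
  proof (rule deg_upper[OF c2 eb], intro allI impI)
    fix x :: 'a and as :: "'a list" assume len: "d < length as"
    have "cube (\<lambda>y. \<pi> j (?N y)) x as = 0"
      by (rule cube_piN3[where \<pi>="\<pi> j", OF \<pi>add]) (use len d2 d_def in auto)
    thus "cube (\<lambda>y. of_bool (g j y)) x as = 0" using cube_g cubeE_vanish[OF len] by simp
  qed
  have lower_crit: "d \<le> D j" if "cube (\<lambda>y. of_bool (g j y)) x as \<noteq> 0" "length as = d" for j x as
  proof (rule ccontr)
    assume "\<not> d \<le> D j"
    hence "bool_alg_degree e ?n (g j) < length as" using that(2) unfolding D_def by simp
    thus False using deg_vanish[OF c2 eb, of "g j" as x] that(1) by simp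
  qed
  have lower: "\<exists>j<k. d \<le> D j"
  proof (cases "d \<ge> 3")
    case True
    obtain dir where dir: "\<forall>m<\<tau>. \<forall>i<\<tau>. tr ?n (v i * dir m) = (if i = m then 1 else 0)"
      using dual_dirs[OF indep, of \<tau>] by auto
    have c1: "coords w k 1 \<noteq> {}"
    proof
      assume "coords w k 1 = {}"
      hence "(1::'a) = 0" using coords_in[OF c2 wb subF_1[OF card k1]] by simp
      thus False by simp
    qed
    then obtain j0 where j0: "j0 \<in> coords w k 1" by auto
    have j0k: "j0 < k" using j0 coords_in[OF c2 wb subF_1[OF card k1]] by auto
    have pj0: "\<pi> j0 1 = 1" unfolding \<pi>_def lc_def using j0 by simp
    let ?ms = "sorted_list_of_set M0"
    have fM0: "finite M0" using Sfin M0 by auto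
    have "cube E 0 (map dir ?ms) = (if M0 \<in> S then 1 else 0)"
      unfolding Efun
    proof (rule cube_mobius[where L=Lt, OF c2 Lt_add])
      show "finite S" "\<forall>M'\<in>S. finite M'" using Sfin by auto
      show "distinct ?ms" "set ?ms = M0" using fM0 by auto
      show "\<forall>m\<in>M0. \<forall>M'\<in>S. \<forall>i\<in>M'. Lt i (dir m) = (if i = m then 1 else 0)"
      proof (intro ballI)
        fix m M' i assume m: "m \<in> M0" and M': "M' \<in> S" and i: "i \<in> M'"
        have "m < \<tau>" "i < \<tau>" using Sfin M0 m M' i by auto
        thus "Lt i (dir m) = (if i = m then 1 else 0)" unfolding Lt_def using dir by simp
      qed
    qed
    hence cE: "cube E 0 (map dir ?ms) = 1" using M0 by simp
    have "cube (\<lambda>y. \<pi> j0 (?N y)) 0 (map dir ?ms) = 0"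
      by (rule cube_piN3[where \<pi>="\<pi> j0", OF \<pi>add]) (use True M0 fM0 in auto)
    hence "cube (\<lambda>y. of_bool (g j0 y)) 0 (map dir ?ms) = 1" using cube_g pj0 cE by simp
    hence "d \<le> D j0" using lower_crit[of j0 0 "map dir ?ms"] M0 fM0 by simp
    thus ?thesis using j0k by blast
  next
    case False
    hence d2': "d = 2" using d2 d_def by simp
    have "card M0 \<le> card {..<\<tau>}" using Sfin M0 by (intro card_mono) auto
    hence "2 \<le> \<tau>" using M0 d2' by simp
    moreover note tk
    ultimately have k2: "2 \<le> k" by simp
    have wj: "w j \<in> subF k" if "j < k" for j
    proof -
      have "(\<Sum>i\<in>{j}. w i) \<in> (\<lambda>T. \<Sum>i\<in>T. w i) ` Pow {..<k}" using that by (intro imageI) auto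
      moreover have "(\<lambda>T. \<Sum>i\<in>T. w i) ` Pow {..<k} = subF k" using wb unfolding F2_basis_def bij_betw_def by simp
      ultimately have "(\<Sum>i\<in>{j}. w i) \<in> subF k" by simp
      thus ?thesis by simp
    qed
    have \<pi>w: "\<pi> i (w j) = (if i = j then 1 else 0)" if "j < k" for i j
      unfolding \<pi>_def by (rule lc_basis[OF c2 wb that])
    have Q1: "Qf (2 ^ k) 1 a = a + a ^ (2 ^ k)" for a :: 'a unfolding Qf_def by simp
    have cg2: "cube (\<lambda>y. of_bool (g j y)) 0 [a, 1] = \<pi> j (a + a ^ (2 ^ k)) + \<pi> j 1 * cube E 0 [a, 1]" for j a
      using cube_g cube_piN2[where \<pi>="\<pi> j", OF \<pi>add] Q1 by simp
    obtain a0 where a0: "a0 + a0 ^ (2 ^ k) = w 0" using relTr_surj[OF wb wj, of 0] k2 by auto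
    obtain a1 where a1: "a1 + a1 ^ (2 ^ k) = w 1" using relTr_surj[OF wb wj, of 1] k2 by auto
    have p01: "\<pi> j 1 = 0 \<or> \<pi> j 1 = 1" for j unfolding \<pi>_def lc_def by simp
    show ?thesis
    proof (cases "\<pi> 0 1 = 0")
      case True
      have "cube (\<lambda>y. of_bool (g 0 y)) 0 [a0, 1] = 1" using cg2[of 0 a0] a0 True \<pi>w k2 by simp
      hence "d \<le> D 0" using lower_crit[of 0 0 "[a0, 1]"] d2' by simp
      moreover have "(0::nat) < k" using k2 by simp
      ultimately show ?thesis by blast
    next
      case F0: False
      show ?thesis
      proof (cases "\<pi> 1 1 = 0")
        case True
        have "cube (\<lambda>y. of_bool (g 1 y)) 0 [a1, 1] = 1" using cg2[of 1 a1] a1 True \<pi>w k2 by simp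
        hence "d \<le> D 1" using lower_crit[of 1 0 "[a1, 1]"] d2' by simp
        moreover have "(1::nat) < k" using k2 by simp
        ultimately show ?thesis by blast
      next
        case F1: False
        have e0: "\<pi> 0 1 = 1" "\<pi> 1 1 = 1" using F0 F1 p01 by auto
        show ?thesis
        proof (rule ccontr)
          assume "\<not> ?thesis"
          hence nd: "\<forall>j<k. \<not> 2 \<le> D j" using d2' by simp
          have "D 0 < 2" using nd k2 by (metis not_le less_le_trans zero_less_numeral pos2)
          moreover have "D 1 < 2" using nd k2 by (metis not_le less_le_trans one_less_numeral_iff semiring_norm(76))
          ultimately have "D 0 < 2" "D 1 < 2" by auto
          hence D01: "bool_alg_degree e ?n (g 0) < length [a0, 1]" "bool_alg_degree e ?n (g 1) < length [a0, 1]"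
            unfolding D_def by simp_all
          have "cube (\<lambda>y. of_bool (g 0 y)) 0 [a0, 1] = 0" by (rule deg_vanish[OF c2 eb D01(1)])
          moreover have "cube (\<lambda>y. of_bool (g 1 y)) 0 [a0, 1] = 0" by (rule deg_vanish[OF c2 eb D01(2)])
          ultimately have "cube (\<lambda>y. of_bool (g 0 y)) 0 [a0, 1] = 0" "cube (\<lambda>y. of_bool (g 1 y)) 0 [a0, 1] = 0"
            by auto
          hence "1 + cube E 0 [a0, 1] = 0" "0 + cube E 0 [a0, 1] = 0"
            using cg2[of 0 a0] cg2[of 1 a0] a0 e0 \<pi>w k2 by auto
          thus False by simp
        qed
      qed
    qed
  qed
  have vec: "vec_alg_degree e ?n w k ?H = Max (insert 0 (D ` {..<k}))"
    unfolding vec_alg_degree_def D_def g_def by simp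
  have m1: "Max (insert 0 (D ` {..<k})) \<le> d" using upper by (simp add: Max_le_iff)
  obtain j where "j < k" "d \<le> D j" using lower by blast
  hence m2: "d \<le> Max (insert 0 (D ` {..<k}))" by (intro le_trans[OF _ Max_ge]) auto
  have "Max (insert 0 (D ` {..<k})) = d" using m1 m2 by (rule antisym)
  thus ?thesis using vec unfolding d_def by (simp only:)
qed
end

theorem theorem5:
  fixes n k \<tau> :: nat and u :: "nat \<Rightarrow> 'a::{field,finite}"
    and S :: "nat set set" and idx :: "nat \<Rightarrow> nat"
  assumes card: "card (UNIV :: 'a set) = 2 ^ n"
    and nk: "n = 2 * k"
    and tau: "1 \<le> \<tau>" "\<tau> \<le> k"
    and u_dist: "\<forall>i<k. \<forall>j<k. i \<noteq> j \<longrightarrow> u i \<noteq> u j"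
    and u_prod: "\<forall>i<k. \<forall>j<k. i < j \<longrightarrow> u i * u j ^ (2 ^ k) \<in> subF k - {0}"
    and F: "reduced_poly \<tau> S"
    and idx: "inj_on idx {..<\<tau>}" "idx ` {..<\<tau>} \<subseteq> {..<k}"
  defines "H \<equiv> (\<lambda>x. x ^ (2 ^ k + 1) +
             (if poly_eval S (\<lambda>j. tr n (u (idx j) * x) \<noteq> 0) then 1 else 0))"
  shows "vectorial_bent n k H \<and>
         (F2_lin_indep (\<lambda>j. u (idx j)) \<tau> \<and> poly_degree S \<ge> 2 \<longrightarrow>
            (\<forall>e w. F2_basis e n UNIV \<and> F2_basis w k (subF k) \<longrightarrow>
               vec_alg_degree e n w k H = poly_degree S))"
proof -
  have k1: "k \<ge> 1" using tau by simp
  have card': "card (UNIV :: 'a set) = 2 ^ (2 * k)" using card nk by simp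
  define v where "v j = u (idx j)" for j
  have vq: "\<forall>i<\<tau>. \<forall>j<\<tau>. (v i) ^ (2 ^ k) * v j \<in> subF k"
  proof (intro allI impI)
    fix i j assume i: "i < \<tau>" and j: "j < \<tau>"
    have a: "idx i < k" and b: "idx j < k" using idx(2) i j by auto
    show "(v i) ^ (2 ^ k) * v j \<in> subF k"
    proof (cases "idx i < idx j")
      case True
      hence "u (idx i) * u (idx j) ^ (2 ^ k) \<in> subF k" using u_prod a b by blast
      hence "u (idx j) ^ (2 ^ k) * u (idx i) \<in> subF k" by (simp add: mult.commute)
      hence "u (idx j) * u (idx i) ^ (2 ^ k) \<in> subF k" by (rule subF_conj[OF card' k1])
      thus ?thesis unfolding v_def by (simp add: mult.commute)
    next
      case False
      show ?thesis
      proof (cases "idx i = idx j")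
        case True
        have "u (idx i) ^ (2 ^ k + 1) \<in> subF k" by (rule N_subF[OF card' k1])
        thus ?thesis unfolding v_def using True by (simp add: power_add mult.commute)
      next
        case F2: False
        hence "idx j < idx i" using False by simp
        hence "u (idx j) * u (idx i) ^ (2 ^ k) \<in> subF k" using u_prod a b by blast
        thus ?thesis unfolding v_def by (simp add: mult.commute)
      qed
    qed
  qed
  have Heq: "H = (\<lambda>x. x ^ (2 ^ k + 1) + (if poly_eval S (\<lambda>j. tr (2 * k) (v j * x) \<noteq> 0) then 1 else 0))"
    unfolding H_def v_def nk ..
  have part1: "vectorial_bent n k H"
    unfolding Heq nk by (rule bent_part[OF card' k1 vq F])
  have part2: "vec_alg_degree e n w k H = poly_degree S"
    if ind: "F2_lin_indep (\<lambda>j. u (idx j)) \<tau>" and d2: "poly_degree S \<ge> 2"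
      and eb: "F2_basis e n UNIV" and wb: "F2_basis w k (subF k)" for e w
  proof -
    have ind': "F2_lin_indep v \<tau>" using ind unfolding v_def .
    have eb': "F2_basis e (2 * k) UNIV" using eb nk by simp
    show ?thesis unfolding Heq nk by (rule degree_part[OF card' k1 F ind' d2 eb' wb tau(2)])
  qed
  show ?thesis using part1 part2 by blast
qed

end
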